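(* Let $m=(m_1,m_2)\in\mathbb{R}^2$ with $m_1>0$ and $m_2\geq 0$. Let $b_1\in\mathbb{R}$, $b_2\in\mathbb{Z}$, and $L_1,L_2$ positive integers with $L_1\geq \frac{m_2}{m_1}+1$. Then the set $$P(b_1,b_2,L_1,L_2)=\Big\{x\in\mathbb{Z}^2:\ 0\leq \tfrac{m}{m_1}\cdot(x-b)<L_1,\ 0\leq x_2-b_2<L_2\Big\},\qquad b=(b_1,b_2),$$ is connected as a subgraph of the nearest-neighbor graph of $\mathbb{Z}^2$.
   Context: Two points of $\mathbb{Z}^2$ are neighbors if they differ by $\pm e_1$ or $\pm e_2$; a subset is connected if the induced subgraph is connected. *)

theory Defs
  imports Main Complex_Main
begin

definition zneighbor :: "int \<times> int \<Rightarrow> int \<times> int \<Rightarrow> bool" where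
  "zneighbor p q \<longleftrightarrow> \<bar>fst p - fst q\<bar> + \<bar>snd p - snd q\<bar> = 1"

definition zconnected :: "(int \<times> int) set \<Rightarrow> bool" where
  "zconnected S \<longleftrightarrow> (\<forall>p\<in>S. \<forall>q\<in>S. \<exists>xs. xs \<noteq> [] \<and> hd xs = p \<and> last xs = q \<and> set xs \<subseteq> S \<and>
       (\<forall>i. Suc i < length xs \<longrightarrow> zneighbor (xs ! i) (xs ! Suc i)))"

definition Pset :: "real \<Rightarrow> real \<Rightarrow> real \<Rightarrow> int \<Rightarrow> nat \<Rightarrow> nat \<Rightarrow> (int \<times> int) set" where
  "Pset m1 m2 b1 b2 L1 L2 = {x. let t = (m1 * (real_of_int (fst x) - b1) + m2 * real_of_int (snd x - b2)) / m1
      in 0 \<le> t \<and> t < real L1 \<and> 0 \<le> snd x - b2 \<and> snd x - b2 < int L2}"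

end

theory Submission
  imports Defs
begin

inductive reach :: "(int \<times> int) set \<Rightarrow> int \<times> int \<Rightarrow> int \<times> int \<Rightarrow> bool" for S where
  rrefl: "p \<in> S \<Longrightarrow> reach S p p"
| rstep: "reach S p q \<Longrightarrow> r \<in> S \<Longrightarrow> zneighbor q r \<Longrightarrow> reach S p r"

lemma reach_mem: "reach S p q \<Longrightarrow> p \<in> S \<and> q \<in> S"
  by (induction rule: reach.induct) auto

lemma reach_path: "reach S p q \<Longrightarrow> \<exists>xs. xs \<noteq> [] \<and> hd xs = p \<and> last xs = q \<and> set xs \<subseteq> S \<and>
       (\<forall>i. Suc i < length xs \<longrightarrow> zneighbor (xs ! i) (xs ! Suc i))"
proof (induction rule: reach.induct)
  case (rrefl p)
  then show ?case by (intro exI[of _ "[p]"]) auto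
next
  case (rstep p q r)
  then obtain xs where xs: "xs \<noteq> []" "hd xs = p" "last xs = q" "set xs \<subseteq> S"
    "\<forall>i. Suc i < length xs \<longrightarrow> zneighbor (xs ! i) (xs ! Suc i)" by blast
  have "\<forall>i. Suc i < length (xs @ [r]) \<longrightarrow> zneighbor ((xs @ [r]) ! i) ((xs @ [r]) ! Suc i)"
  proof (intro allI impI)
    fix i assume i: "Suc i < length (xs @ [r])"
    show "zneighbor ((xs @ [r]) ! i) ((xs @ [r]) ! Suc i)"
    proof (cases "Suc i < length xs")
      case True then show ?thesis using xs(5) by (simp add: nth_append)
    next
      case False
      then have "Suc i = length xs" using i by simp
      then have ii: "i = length xs - 1" by simp
      then have "(xs @ [r]) ! i = q" "(xs @ [r]) ! Suc i = r"
        using xs(1,3) ii \<open>Suc i = length xs\<close> by (auto simp: nth_append last_conv_nth)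
      then show ?thesis using rstep.hyps by simp
    qed
  qed
  then show ?case using xs rstep.hyps by (intro exI[of _ "xs @ [r]"]) auto
qed

lemma reach_trans: "reach S q r \<Longrightarrow> reach S p q \<Longrightarrow> reach S p r"
  by (induction rule: reach.induct) (auto intro: rstep)

lemma zneighbor_sym: "zneighbor p q \<Longrightarrow> zneighbor q p"
  unfolding zneighbor_def by (simp add: abs_minus_commute)

lemma reach_sym: "reach S p q \<Longrightarrow> reach S q p"
proof (induction rule: reach.induct)
  case (rrefl p) then show ?case by (rule reach.rrefl)
next
  case (rstep p q r)
  have "reach S r q" using rstep.hyps
    by (meson reach.rrefl reach.rstep reach_mem zneighbor_sym)
  then show ?case using rstep.IH reach_trans by blast
qed

lemma Pset_mem:
  assumes "m1 > 0"
  shows "x \<in> Pset m1 m2 b1 b2 L1 L2 \<longleftrightarrow>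
    0 \<le> snd x - b2 \<and> snd x - b2 < int L2 \<and>
    b1 - m2 / m1 * real_of_int (snd x - b2) \<le> real_of_int (fst x) \<and>
    real_of_int (fst x) < b1 - m2 / m1 * real_of_int (snd x - b2) + real L1"
proof -
  have t: "(m1 * (real_of_int (fst x) - b1) + m2 * real_of_int (snd x - b2)) / m1
     = real_of_int (fst x) - b1 + m2 / m1 * real_of_int (snd x - b2)"
    using assms by (simp add: field_simps)
  show ?thesis unfolding Pset_def Let_def mem_Collect_eq t by linarith
qed

theorem mainTheorem5:
  fixes m1 m2 b1 :: real and b2 :: int and L1 L2 :: nat
  assumes "m1 > 0" and "m2 \<ge> 0" and "L1 > 0" and "L2 > 0"
    and "real L1 \<ge> m2 / m1 + 1"
  shows "zconnected (Pset m1 m2 b1 b2 L1 L2)"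
proof -
  define S where "S = Pset m1 m2 b1 b2 L1 L2"
  define c where "c = m2 / m1"
  define A where "A y = b1 - c * real_of_int (y - b2)" for y
  define lx where "lx y = \<lceil>A y\<rceil>" for y
  have c0: "c \<ge> 0" using assms unfolding c_def by simp
  have cL: "c + 1 \<le> real L1" using assms unfolding c_def by simp
  have mem: "(u, y) \<in> S \<longleftrightarrow> 0 \<le> y - b2 \<and> y - b2 < int L2 \<and> A y \<le> real_of_int u \<and>
      real_of_int u < A y + real L1" for u y
    using Pset_mem[OF assms(1), of "(u,y)"] unfolding S_def A_def c_def by simp
  have lxS: "(lx y, y) \<in> S" if "0 \<le> y - b2" "y - b2 < int L2" for y
  proof -
    have "real_of_int (lx y) < A y + 1" unfolding lx_def by linarith
    moreover have "(1::real) \<le> real L1" using assms(3) by simp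
    ultimately show ?thesis using that mem unfolding lx_def by auto
  qed
  have horiz: "(u, y) \<in> S \<Longrightarrow> (u + int k, y) \<in> S \<Longrightarrow> reach S (u, y) (u + int k, y)" for u y k
  proof (induction k)
    case 0 then show ?case by (simp add: reach.rrefl)
  next
    case (Suc k)
    have "(u + int k, y) \<in> S" using Suc.prems mem by auto
    then have "reach S (u, y) (u + int k, y)" using Suc by simp
    moreover have "zneighbor (u + int k, y) (u + int (Suc k), y)" unfolding zneighbor_def by simp
    ultimately show ?case using Suc.prems(2) by (auto intro: reach.rstep)
  qed
  have horiz2: "reach S (u, y) (v, y)" if "(u, y) \<in> S" "(v, y) \<in> S" for u v y
  proof (cases "u \<le> v")
    case True
    then have "v = u + int (nat (v - u))" by simp
    then show ?thesis using horiz that by metis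
  next
    case False
    then have "u = v + int (nat (u - v))" by simp
    then show ?thesis using horiz that reach_sym by metis
  qed
  define p0 where "p0 = (lx b2, b2)"
  have vert0: "b2 \<le> y \<Longrightarrow> y - b2 < int L2 \<longrightarrow> reach S p0 (lx y, y)" for y
  proof (induction y rule: int_ge_induct)
    case base
    then show ?case unfolding p0_def using lxS assms(4) by (simp add: reach.rrefl)
  next
    case (step y)
    show ?case
    proof
      assume yl: "y + 1 - b2 < int L2"
      have ry: "reach S p0 (lx y, y)" using step yl by simp
      have up: "(lx y, y + 1) \<in> S"
      proof -
        have "A (y + 1) = A y - c" unfolding A_def by (simp add: algebra_simps)
        moreover have "A y \<le> real_of_int (lx y)" "real_of_int (lx y) < A y + 1"
          unfolding lx_def by linarith+
        ultimately show ?thesis using mem step.hyps yl c0 cL by auto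
      qed
      have "zneighbor (lx y, y) (lx y, y + 1)" unfolding zneighbor_def by simp
      then have "reach S p0 (lx y, y + 1)" using ry up reach.rstep by blast
      moreover have "reach S (lx y, y + 1) (lx (y + 1), y + 1)"
        using horiz2 up lxS step.hyps yl by simp
      ultimately show "reach S p0 (lx (y + 1), y + 1)" using reach_trans by blast
    qed
  qed
  have vert: "0 \<le> y - b2 \<Longrightarrow> y - b2 < int L2 \<Longrightarrow> reach S p0 (lx y, y)" for y
    using vert0[of y] by simp
  have all: "reach S p0 q" if "q \<in> S" for q
  proof -
    obtain u y where q: "q = (u, y)" by (cases q)
    have y: "0 \<le> y - b2" "y - b2 < int L2" using that q mem by auto
    show ?thesis using vert[OF y] horiz2[OF lxS[OF y], of u] that q reach_trans by blast
  qed
  show ?thesis unfolding zconnected_def S_def[symmetric]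
  proof (intro ballI)
    fix p q assume "p \<in> S" "q \<in> S"
    then have "reach S p q" using all reach_sym reach_trans by blast
    then show "\<exists>xs. xs \<noteq> [] \<and> hd xs = p \<and> last xs = q \<and> set xs \<subseteq> S \<and>
       (\<forall>i. Suc i < length xs \<longrightarrow> zneighbor (xs ! i) (xs ! Suc i))" by (rule reach_path)
  qed
qed

end
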